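(* Let $T,T'$ be one-to-one reduced linear trellises of the same length and let $f:T\to T'$ be an isomorphism of trellises. Then every $f_i:V_i(T)\to V_i(T')$ is linear, i.e. $f$ is a linear isomorphism. In particular, on a one-to-one reduced trellis there is exactly one vector space structure on each vertex set making it linear, up to the given labels (two such structures are related by the identity being a linear isomorphism).
   Context: Let $\mathbb{F}$ be a finite field and $n\ge1$; indices are taken in $\mathbb{Z}_n$. A trellis $T$ of length $n$ over $\mathbb{F}$ consists of pairwise disjoint finite vertex sets $V_i(T)$, $i\in\mathbb{Z}_n$, and edge sets $E_i(T)\subseteq V_i(T)\times\mathbb{F}\times V_{i+1}(T)$; $(v,\alpha,w)\in E_i(T)$ is an edge from $v$ to $w$ with label $\alpha$. Trellises are trim. $T$ is linear if each $V_i(T)$ is an $\mathbb{F}$-vector space and each $E_i(T)$ is a subspace. A cycle is a closed path of length $n$ starting in $V_0(T)$, identified with $(\mathbf{v},\boldsymbol{\alpha})\in\prod_iV_i(T)\times\mathbb{F}^n$; $\mathbb{S}(T)$ is the set of cycles, $L(\mathbf{v},\boldsymbol{\alpha})=\boldsymbol{\alpha}$, $C(T)=L(\mathbb{S}(T))$. $T$ is reduced if every edge lies on a cycle and one-to-one if $L:\mathbb{S}(T)\to C(T)$ is injective. An isomorphism $f:T\to T'$ is a family of bijections $f_i:V_i(T)\to V_i(T')$ with $(v,\alpha,w)\in E_i(T)\iff(f_i(v),\alpha,f_{i+1}(w))\in E_i(T')$. *)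

theory Defs
  imports "HOL-Algebra.Module"
begin

text \<open>Indices of Z_n are represented by natural numbers i < n; the successor of i
  is (i + 1) mod n.\<close>

definition trellis ::
  "('a, 'c) ring_scheme \<Rightarrow> nat \<Rightarrow> (nat \<Rightarrow> 'v set) \<Rightarrow> (nat \<Rightarrow> ('v \<times> 'a \<times> 'v) set) \<Rightarrow> bool" where
  "trellis R n V E \<longleftrightarrow>
     n \<ge> 1 \<and>
     (\<forall>i<n. finite (V i)) \<and>
     (\<forall>i<n. \<forall>j<n. i \<noteq> j \<longrightarrow> V i \<inter> V j = {}) \<and>
     (\<forall>i<n. E i \<subseteq> V i \<times> carrier R \<times> V ((i + 1) mod n)) \<and>
     \<comment> \<open>trim: every vertex has an outgoing and an incoming edge\<close>
     (\<forall>i<n. \<forall>v\<in>V i. (\<exists>a w. (v, a, w) \<in> E i)) \<and>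
     (\<forall>i<n. \<forall>w\<in>V ((i + 1) mod n). (\<exists>v a. (v, a, w) \<in> E i))"

text \<open>A cycle: a vertex sequence v and label sequence al (only indices < n matter).\<close>
definition is_cycle ::
  "nat \<Rightarrow> (nat \<Rightarrow> 'v set) \<Rightarrow> (nat \<Rightarrow> ('v \<times> 'a \<times> 'v) set) \<Rightarrow> (nat \<Rightarrow> 'v) \<Rightarrow> (nat \<Rightarrow> 'a) \<Rightarrow> bool" where
  "is_cycle n V E v al \<longleftrightarrow>
     (\<forall>i<n. v i \<in> V i \<and> (v i, al i, v ((i + 1) mod n)) \<in> E i)"

definition reduced ::
  "nat \<Rightarrow> (nat \<Rightarrow> 'v set) \<Rightarrow> (nat \<Rightarrow> ('v \<times> 'a \<times> 'v) set) \<Rightarrow> bool" where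
  "reduced n V E \<longleftrightarrow>
     (\<forall>i<n. \<forall>e\<in>E i. \<exists>v al. is_cycle n V E v al \<and> e = (v i, al i, v ((i + 1) mod n)))"

text \<open>One-to-one: the labeling map from cycles to the code is injective.\<close>
definition one_to_one ::
  "nat \<Rightarrow> (nat \<Rightarrow> 'v set) \<Rightarrow> (nat \<Rightarrow> ('v \<times> 'a \<times> 'v) set) \<Rightarrow> bool" where
  "one_to_one n V E \<longleftrightarrow>
     (\<forall>v w al be. is_cycle n V E v al \<and> is_cycle n V E w be \<and> (\<forall>i<n. al i = be i)
        \<longrightarrow> (\<forall>i<n. v i = w i))"

definition linear_trellis ::
  "('a, 'c) ring_scheme \<Rightarrow> nat \<Rightarrow> (nat \<Rightarrow> 'v set) \<Rightarrow> (nat \<Rightarrow> ('v \<times> 'a \<times> 'v) set)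
     \<Rightarrow> (nat \<Rightarrow> ('a, 'v) module) \<Rightarrow> bool" where
  "linear_trellis R n V E M \<longleftrightarrow>
     trellis R n V E \<and>
     (\<forall>i<n. module R (M i) \<and> carrier (M i) = V i) \<and>
     (\<forall>i<n. (\<zero>\<^bsub>M i\<^esub>, \<zero>\<^bsub>R\<^esub>, \<zero>\<^bsub>M ((i + 1) mod n)\<^esub>) \<in> E i) \<and>
     (\<forall>i<n. \<forall>v a w v' a' w'. (v, a, w) \<in> E i \<longrightarrow> (v', a', w') \<in> E i \<longrightarrow>
        (v \<oplus>\<^bsub>M i\<^esub> v', a \<oplus>\<^bsub>R\<^esub> a', w \<oplus>\<^bsub>M ((i + 1) mod n)\<^esub> w') \<in> E i) \<and>
     (\<forall>i<n. \<forall>c v a w. c \<in> carrier R \<longrightarrow> (v, a, w) \<in> E i \<longrightarrow>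
        (c \<odot>\<^bsub>M i\<^esub> v, c \<otimes>\<^bsub>R\<^esub> a, c \<odot>\<^bsub>M ((i + 1) mod n)\<^esub> w) \<in> E i)"

definition trellis_iso ::
  "nat \<Rightarrow> (nat \<Rightarrow> 'v set) \<Rightarrow> (nat \<Rightarrow> ('v \<times> 'a \<times> 'v) set)
     \<Rightarrow> (nat \<Rightarrow> 'w set) \<Rightarrow> (nat \<Rightarrow> ('w \<times> 'a \<times> 'w) set) \<Rightarrow> (nat \<Rightarrow> 'v \<Rightarrow> 'w) \<Rightarrow> bool" where
  "trellis_iso n V E V' E' f \<longleftrightarrow>
     (\<forall>i<n. bij_betw (f i) (V i) (V' i)) \<and>
     (\<forall>i<n. \<forall>v\<in>V i. \<forall>a. \<forall>w\<in>V ((i + 1) mod n).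
        (v, a, w) \<in> E i \<longleftrightarrow> (f i v, a, f ((i + 1) mod n) w) \<in> E' i)"

definition linear_map ::
  "('a, 'c) ring_scheme \<Rightarrow> ('a, 'v) module \<Rightarrow> ('a, 'w) module \<Rightarrow> ('v \<Rightarrow> 'w) \<Rightarrow> bool" where
  "linear_map R M N g \<longleftrightarrow>
     (\<forall>x\<in>carrier M. g x \<in> carrier N) \<and>
     (\<forall>x\<in>carrier M. \<forall>y\<in>carrier M. g (x \<oplus>\<^bsub>M\<^esub> y) = g x \<oplus>\<^bsub>N\<^esub> g y) \<and>
     (\<forall>c\<in>carrier R. \<forall>x\<in>carrier M. g (c \<odot>\<^bsub>M\<^esub> x) = c \<odot>\<^bsub>N\<^esub> g x)"

end

theory Submission
  imports Defs
begin

lemma oto_use: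
  assumes "one_to_one n V E" "is_cycle n V E v al" "is_cycle n V E w al" "i < n"
  shows "v i = w i"
  using assms(1)[unfolded one_to_one_def, rule_format, of v al w al] assms(2-4) by blast

lemma lt_add:
  assumes "linear_trellis R n V E M" "i < n" "(v, a, w) \<in> E i" "(v', a', w') \<in> E i"
  shows "(v \<oplus>\<^bsub>M i\<^esub> v', a \<oplus>\<^bsub>R\<^esub> a', w \<oplus>\<^bsub>M ((i + 1) mod n)\<^esub> w') \<in> E i"
  by (rule assms(1)[unfolded linear_trellis_def, THEN conjunct2, THEN conjunct2, THEN conjunct2, THEN conjunct1, rule_format, OF assms(2-4)])

lemma lt_smult:
  assumes "linear_trellis R n V E M" "i < n" "c \<in> carrier R" "(v, a, w) \<in> E i"
  shows "(c \<odot>\<^bsub>M i\<^esub> v, c \<otimes>\<^bsub>R\<^esub> a, c \<odot>\<^bsub>M ((i + 1) mod n)\<^esub> w) \<in> E i"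
  by (rule assms(1)[unfolded linear_trellis_def, THEN conjunct2, THEN conjunct2, THEN conjunct2, THEN conjunct2, rule_format, OF assms(2-4)])

lemma lt_sub:
  assumes "linear_trellis R n V E M" "i < n"
  shows "E i \<subseteq> V i \<times> carrier R \<times> V ((i + 1) mod n)"
  by (rule assms(1)[unfolded linear_trellis_def, THEN conjunct1, unfolded trellis_def, THEN conjunct2, THEN conjunct2, THEN conjunct2, THEN conjunct1, rule_format, OF assms(2)])

lemma cycle_add:
  assumes lt: "linear_trellis R n V E M"
    and c1: "is_cycle n V E v al" and c2: "is_cycle n V E w be"
  shows "is_cycle n V E (\<lambda>j. v j \<oplus>\<^bsub>M j\<^esub> w j) (\<lambda>j. al j \<oplus>\<^bsub>R\<^esub> be j)"
  unfolding is_cycle_def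
proof (intro allI impI conjI)
  fix i assume i: "i < n"
  from c1 i have e1: "(v i, al i, v ((i + 1) mod n)) \<in> E i" by (simp add: is_cycle_def)
  from c2 i have e2: "(w i, be i, w ((i + 1) mod n)) \<in> E i" by (simp add: is_cycle_def)
  from lt i e1 e2 show e: "(v i \<oplus>\<^bsub>M i\<^esub> w i, al i \<oplus>\<^bsub>R\<^esub> be i,
      v ((i + 1) mod n) \<oplus>\<^bsub>M ((i + 1) mod n)\<^esub> w ((i + 1) mod n)) \<in> E i"
    by (rule lt_add)
  from lt i have "E i \<subseteq> V i \<times> carrier R \<times> V ((i + 1) mod n)"
    by (rule lt_sub)
  with e show "v i \<oplus>\<^bsub>M i\<^esub> w i \<in> V i" by blast
qed

lemma cycle_smult:
  assumes lt: "linear_trellis R n V E M"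
    and c1: "is_cycle n V E v al" and c: "c \<in> carrier R"
  shows "is_cycle n V E (\<lambda>j. c \<odot>\<^bsub>M j\<^esub> v j) (\<lambda>j. c \<otimes>\<^bsub>R\<^esub> al j)"
  unfolding is_cycle_def
proof (intro allI impI conjI)
  fix i assume i: "i < n"
  from c1 i have e1: "(v i, al i, v ((i + 1) mod n)) \<in> E i" by (simp add: is_cycle_def)
  from lt i c e1 show e: "(c \<odot>\<^bsub>M i\<^esub> v i, c \<otimes>\<^bsub>R\<^esub> al i,
      c \<odot>\<^bsub>M ((i + 1) mod n)\<^esub> v ((i + 1) mod n)) \<in> E i"
    by (rule lt_smult)
  from lt i have "E i \<subseteq> V i \<times> carrier R \<times> V ((i + 1) mod n)"
    by (rule lt_sub)
  with e show "c \<odot>\<^bsub>M i\<^esub> v i \<in> V i" by blast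
qed

lemma cycle_map:
  assumes lt: "linear_trellis R n V E M" and iso: "trellis_iso n V E V' E' f"
    and c1: "is_cycle n V E v al"
  shows "is_cycle n V' E' (\<lambda>j. f j (v j)) al"
  unfolding is_cycle_def
proof (intro allI impI conjI)
  fix i assume i: "i < n"
  have n: "n \<ge> 1" by (rule lt[unfolded linear_trellis_def, THEN conjunct1, unfolded trellis_def, THEN conjunct1])
  have i': "(i + 1) mod n < n" using n by simp
  from c1 i have e1: "(v i, al i, v ((i + 1) mod n)) \<in> E i" and vi: "v i \<in> V i"
    by (auto simp add: is_cycle_def)
  from c1 i' have vi': "v ((i + 1) mod n) \<in> V ((i + 1) mod n)" by (simp add: is_cycle_def)
  have "bij_betw (f i) (V i) (V' i)" by (rule iso[unfolded trellis_iso_def, THEN conjunct1, rule_format, OF i])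
  with vi show "f i (v i) \<in> V' i" by (metis bij_betwE)
  show "(f i (v i), al i, f ((i + 1) mod n) (v ((i + 1) mod n))) \<in> E' i"
    using iso[unfolded trellis_iso_def, THEN conjunct2, rule_format, OF i vi vi'] e1 by simp
qed

lemma on_cycle:
  assumes lt: "linear_trellis R n V E M" and red: "reduced n V E"
    and i: "i < n" and x: "x \<in> V i"
  shows "\<exists>v al. is_cycle n V E v al \<and> v i = x"
proof -
  from lt[unfolded linear_trellis_def, THEN conjunct1, unfolded trellis_def, THEN conjunct2, THEN conjunct2, THEN conjunct2, THEN conjunct2, THEN conjunct1, rule_format, OF i x]
  obtain a w where e: "(x, a, w) \<in> E i" by blast
  from red[unfolded reduced_def, rule_format, OF i e] obtain v al where
    "is_cycle n V E v al" "(x, a, w) = (v i, al i, v ((i + 1) mod n))" by blast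
  then show ?thesis by auto
qed

theorem mainTheorem7:
  fixes R :: "('a, 'c) ring_scheme"
    and n :: nat
    and V :: "nat \<Rightarrow> 'v set" and E :: "nat \<Rightarrow> ('v \<times> 'a \<times> 'v) set"
    and M :: "nat \<Rightarrow> ('a, 'v) module"
    and V' :: "nat \<Rightarrow> 'w set" and E' :: "nat \<Rightarrow> ('w \<times> 'a \<times> 'w) set"
    and M' :: "nat \<Rightarrow> ('a, 'w) module"
    and f :: "nat \<Rightarrow> 'v \<Rightarrow> 'w"
  assumes "field R" and "finite (carrier R)"
    and "linear_trellis R n V E M" and "reduced n V E" and "one_to_one n V E"
    and "linear_trellis R n V' E' M'" and "reduced n V' E'" and "one_to_one n V' E'"
    and "trellis_iso n V E V' E' f"
  shows "\<forall>i<n. linear_map R (M i) (M' i) (f i)"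
proof (intro allI impI)
  fix i assume i: "i < n"
  note lt = assms(3) and red = assms(4) and lt' = assms(6) and oto' = assms(8) and iso = assms(9)
  have cM: "carrier (M i) = V i" using lt[unfolded linear_trellis_def, THEN conjunct2, THEN conjunct1, rule_format, OF i] by simp
  have cM': "carrier (M' i) = V' i" using lt'[unfolded linear_trellis_def, THEN conjunct2, THEN conjunct1, rule_format, OF i] by simp
  show "linear_map R (M i) (M' i) (f i)"
    unfolding linear_map_def cM cM'
  proof (intro conjI ballI)
    fix x assume "x \<in> V i"
    moreover have "bij_betw (f i) (V i) (V' i)" by (rule iso[unfolded trellis_iso_def, THEN conjunct1, rule_format, OF i])
    ultimately show "f i x \<in> V' i" by (metis bij_betwE)
  next
    fix x y assume x: "x \<in> V i" and y: "y \<in> V i"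
    obtain v al where cv: "is_cycle n V E v al" and vx: "v i = x"
      using on_cycle[OF lt red i x] by blast
    obtain w be where cw: "is_cycle n V E w be" and wy: "w i = y"
      using on_cycle[OF lt red i y] by blast
    have c1: "is_cycle n V' E' (\<lambda>j. f j (v j \<oplus>\<^bsub>M j\<^esub> w j)) (\<lambda>j. al j \<oplus>\<^bsub>R\<^esub> be j)"
      using cycle_map[OF lt iso cycle_add[OF lt cv cw]] .
    have c2: "is_cycle n V' E' (\<lambda>j. f j (v j) \<oplus>\<^bsub>M' j\<^esub> f j (w j)) (\<lambda>j. al j \<oplus>\<^bsub>R\<^esub> be j)"
      using cycle_add[OF lt' cycle_map[OF lt iso cv] cycle_map[OF lt iso cw]] .
    have "f i (v i \<oplus>\<^bsub>M i\<^esub> w i) = f i (v i) \<oplus>\<^bsub>M' i\<^esub> f i (w i)"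
      using oto_use[OF oto' c1 c2 i] by simp
    with vx wy show "f i (x \<oplus>\<^bsub>M i\<^esub> y) = f i x \<oplus>\<^bsub>M' i\<^esub> f i y" by simp
  next
    fix c x assume c: "c \<in> carrier R" and x: "x \<in> V i"
    obtain v al where cv: "is_cycle n V E v al" and vx: "v i = x"
      using on_cycle[OF lt red i x] by blast
    have c1: "is_cycle n V' E' (\<lambda>j. f j (c \<odot>\<^bsub>M j\<^esub> v j)) (\<lambda>j. c \<otimes>\<^bsub>R\<^esub> al j)"
      using cycle_map[OF lt iso cycle_smult[OF lt cv c]] .
    have c2: "is_cycle n V' E' (\<lambda>j. c \<odot>\<^bsub>M' j\<^esub> f j (v j)) (\<lambda>j. c \<otimes>\<^bsub>R\<^esub> al j)"
      using cycle_smult[OF lt' cycle_map[OF lt iso cv] c] .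
    have "f i (c \<odot>\<^bsub>M i\<^esub> v i) = c \<odot>\<^bsub>M' i\<^esub> f i (v i)"
      using oto_use[OF oto' c1 c2 i] by simp
    with vx show "f i (c \<odot>\<^bsub>M i\<^esub> x) = c \<odot>\<^bsub>M' i\<^esub> f i x" by simp
  qed
qed

end
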